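(* For every rational number $p/q$ with $4/5 \le p/q < 1$, there exist infinitely many $2$-connected (bridgeless) cubic graphs $G$ such that $m_3(G) = p/q$.
   Context: For a bridgeless cubic graph $G$, $m_3(G)$ denotes the maximum, over all choices of three perfect matchings $M_1, M_2, M_3$ of $G$, of $|M_1\cup M_2\cup M_3|$, divided by $|E(G)|$. *)

theory Defs
  imports Complex_Main
begin

type_synonym graph = "nat set \<times> nat set set"

definition verts :: "graph \<Rightarrow> nat set" where "verts G = fst G"
definition edges :: "graph \<Rightarrow> nat set set" where "edges G = snd G"

definition wf_graph :: "graph \<Rightarrow> bool" where
  "wf_graph G \<longleftrightarrow> finite (verts G) \<and> (\<forall>e\<in>edges G. e \<subseteq> verts G \<and> card e = 2)"

definition degree :: "graph \<Rightarrow> nat \<Rightarrow> nat" where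
  "degree G v = card {e\<in>edges G. v \<in> e}"

definition cubic :: "graph \<Rightarrow> bool" where
  "cubic G \<longleftrightarrow> (\<forall>v\<in>verts G. degree G v = 3)"

definition adj :: "graph \<Rightarrow> (nat \<times> nat) set" where
  "adj G = {(u, v). {u, v} \<in> edges G}"

definition connected_graph :: "graph \<Rightarrow> bool" where
  "connected_graph G \<longleftrightarrow> verts G \<noteq> {} \<and>
     (\<forall>u\<in>verts G. \<forall>v\<in>verts G. (u, v) \<in> (adj G)\<^sup>*)"

definition delete_vertex :: "graph \<Rightarrow> nat \<Rightarrow> graph" where
  "delete_vertex G v = (verts G - {v}, {e\<in>edges G. v \<notin> e})"

definition delete_edge :: "graph \<Rightarrow> nat set \<Rightarrow> graph" where
  "delete_edge G e = (verts G, edges G - {e})"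

definition two_connected :: "graph \<Rightarrow> bool" where
  "two_connected G \<longleftrightarrow> card (verts G) \<ge> 3 \<and> connected_graph G \<and>
     (\<forall>v\<in>verts G. connected_graph (delete_vertex G v))"

definition bridgeless :: "graph \<Rightarrow> bool" where
  "bridgeless G \<longleftrightarrow> (\<forall>u v. {u, v} \<in> edges G \<longrightarrow> (u, v) \<in> (adj (delete_edge G {u, v}))\<^sup>*)"

definition perfect_matching :: "graph \<Rightarrow> nat set set \<Rightarrow> bool" where
  "perfect_matching G M \<longleftrightarrow> M \<subseteq> edges G \<and> (\<forall>v\<in>verts G. \<exists>!e. e \<in> M \<and> v \<in> e)"

definition m3 :: "graph \<Rightarrow> real" where
  "m3 G = real (Max {card (M1 \<union> M2 \<union> M3) | M1 M2 M3.
             perfect_matching G M1 \<and> perfect_matching G M2 \<and> perfect_matching G M3})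
          / real (card (edges G))"

definition graph_iso :: "graph \<Rightarrow> graph \<Rightarrow> bool" where
  "graph_iso G H \<longleftrightarrow> (\<exists>f. bij_betw f (verts G) (verts H) \<and>
     (\<forall>u\<in>verts G. \<forall>v\<in>verts G. {u, v} \<in> edges G \<longleftrightarrow> {f u, f v} \<in> edges H))"

end

theory Submission
  imports Defs
begin

definition lp :: "bool \<Rightarrow> (nat \<times> nat) list" where
 "lp T = [(0,1),(1,2),(2,3),(3,4),(0,4),(1,6),(2,7),(3,8),(4,9)] @
   (if T then [(5,7),(7,9),(6,9),(6,8),(5,8)] else [(5,6),(6,7),(7,8),(8,9),(5,9)])"

definition inc :: "bool \<Rightarrow> nat \<Rightarrow> nat list" where
"inc T j = (if j=0 then [0,4] else if j=1 then [0,1,5] else if j=2 then [1,2,6] else if j=3 then [2,3,7]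
  else if j=4 then [3,4,8] else if j=5 then [9,13,14] else if T then (if j=6 then [5,11,12] else if j=7 then [6,9,10]
  else if j=8 then [7,12,13] else [8,10,11]) else (if j=6 then [5,9,10] else if j=7 then [6,10,11] else if j=8 then [7,11,12] else [8,12,13]))"

definition lslot :: "bool \<Rightarrow> nat \<Rightarrow> nat set" where
"lslot T e = (if e < 14 then {fst (lp T ! e), snd (lp T ! e)} else {5})"

fun none :: "bool list \<Rightarrow> bool" where
 "none [] = True" | "none (b#bs) = (\<not> b \<and> none bs)"
fun one :: "bool list \<Rightarrow> bool" where
 "one [] = False" | "one (b#bs) = (b \<and> none bs \<or> \<not> b \<and> one bs)"

definition lok :: "bool \<Rightarrow> (nat \<Rightarrow> bool) \<Rightarrow> bool \<Rightarrow> bool" where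
 "lok T x y = (\<forall>j<10. one (map x (inc T j) @ (if j = 0 then [y] else [])))"

definition pp :: "nat \<Rightarrow> nat list" where
 "pp k = [[0,2,8,9,12],[0,3,6,11,13],[1,3,10,12,14],[1,4,7,9,11],[2,4,5,10,13],[5,6,7,8,14]] ! k"

lemma all15: "(\<forall>e<(15::nat). P e) \<longleftrightarrow> P 0 \<and> P 1 \<and> P 2 \<and> P 3 \<and> P 4 \<and> P 5 \<and> P 6 \<and> P 7 \<and> P 8 \<and> P 9 \<and> P 10 \<and> P 11 \<and> P 12 \<and> P 13 \<and> P 14"
  by (simp add: numeral_eq_Suc All_less_Suc conj_ac)
lemma all14: "(\<forall>e<(14::nat). P e) \<longleftrightarrow> P 0 \<and> P 1 \<and> P 2 \<and> P 3 \<and> P 4 \<and> P 5 \<and> P 6 \<and> P 7 \<and> P 8 \<and> P 9 \<and> P 10 \<and> P 11 \<and> P 12 \<and> P 13"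
  by (simp add: numeral_eq_Suc All_less_Suc conj_ac)
lemma all10: "(\<forall>e<(10::nat). P e) \<longleftrightarrow> P 0 \<and> P 1 \<and> P 2 \<and> P 3 \<and> P 4 \<and> P 5 \<and> P 6 \<and> P 7 \<and> P 8 \<and> P 9"
  by (simp add: numeral_eq_Suc All_less_Suc conj_ac)
lemma all11: "(\<forall>e<(11::nat). P e) \<longleftrightarrow> P 0 \<and> P 1 \<and> P 2 \<and> P 3 \<and> P 4 \<and> P 5 \<and> P 6 \<and> P 7 \<and> P 8 \<and> P 9 \<and> P 10"
  by (simp add: numeral_eq_Suc All_less_Suc conj_ac)
lemma all6: "(\<forall>e<(6::nat). P e) \<longleftrightarrow> P 0 \<and> P 1 \<and> P 2 \<and> P 3 \<and> P 4 \<and> P 5"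
  by (simp add: numeral_eq_Suc All_less_Suc conj_ac)
lemma ex6: "(\<exists>e<(6::nat). P e) \<longleftrightarrow> P 0 \<or> P 1 \<or> P 2 \<or> P 3 \<or> P 4 \<or> P 5"
  by (simp add: numeral_eq_Suc Ex_less_Suc disj_ac)

lemma lp_ord: "\<forall>e<14. fst (lp T ! e) < snd (lp T ! e) \<and> snd (lp T ! e) < 10"
  unfolding all14 by (simp add: lp_def)

lemma slot_inc_all: "\<forall>e<15. \<forall>j<10. j \<in> lslot T e \<longleftrightarrow> e \<in> set (inc T j)"
  unfolding all15 all10 by (cases T) (simp_all add: lslot_def lp_def inc_def)


lemma pat: "lok True x y \<Longrightarrow> y = x 14 \<and> (\<exists>k<6. \<forall>e<15. x e \<longleftrightarrow> e \<in> set (pp k))"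
  unfolding lok_def all10 ex6 all15 apply (simp add: inc_def pp_def) by sat

lemma triple0: "\<forall>k1<6. \<forall>k2<6. \<forall>k3<6. length (remdups (pp k1 @ pp k2 @ pp k3)) \<le> 12"
  unfolding all6 by (simp add: pp_def)


lemma lp_dist: "distinct (lp T)" and lp_len: "length (lp T) = 14"
  by (simp_all add: lp_def)

lemma inc_prop: "\<forall>j<10. (\<forall>e\<in>set (inc T j). e < 15) \<and> distinct (inc T j) \<and> length (inc T j) = (if j = 0 then 2 else 3)
   \<and> (14 \<in> set (inc T j) \<longleftrightarrow> j = 5)"
  unfolding all10 by (cases T) (simp_all add: inc_def)

definition ge :: "nat \<Rightarrow> nat \<Rightarrow> nat \<Rightarrow> nat \<Rightarrow> nat set" where
 "ge N a i e = (if e < 14 then {10*i + fst (lp (i<a) ! e), 10*i + snd (lp (i<a) ! e)}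
    else {10*i+5, 10*((i+1) mod N)})"

definition Gr :: "nat \<Rightarrow> nat \<Rightarrow> graph" where
 "Gr N a = ({..<10*N}, (\<lambda>(i,e). ge N a i e) ` ({..<N} \<times> {..<15}))"

definition prv :: "nat \<Rightarrow> nat \<Rightarrow> nat" where "prv N i = (i + N - 1) mod N"

lemma verts_Gr: "verts (Gr N a) = {..<10*N}" by (simp add: Gr_def verts_def)
lemma edges_Gr: "edges (Gr N a) = (\<lambda>(i,e). ge N a i e) ` ({..<N} \<times> {..<15})" by (simp add: Gr_def edges_def)

lemma blk_eq: assumes "j < 10" "k < (10::nat)" shows "(10*i+j = 10*i'+k) \<longleftrightarrow> (i = i' \<and> j = k)"
proof
  assume h: "10*i+j = 10*i'+k"
  have "(10*i+j) div 10 = i" "(10*i'+k) div 10 = i'" using assms by simp_all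
  then have "i = i'" using h by simp
  then show "i = i' \<and> j = k" using h by simp
qed simp

lemma mem_ge: assumes "i < N" "j < 10" "e < 15"
  shows "10*i+j \<in> ge N a i' e \<longleftrightarrow> (i' = i \<and> j \<in> lslot (i<a) e) \<or> (e = 14 \<and> j = 0 \<and> i = (i'+1) mod N)"
proof (cases "e < 14")
  case True
  then have b: "fst (lp (i'<a) ! e) < 10" "snd (lp (i'<a) ! e) < 10" using lp_ord by (meson order.strict_trans)+
  show ?thesis using True b assms blk_eq[of j "fst (lp (i'<a) ! e)" i i'] blk_eq[of j "snd (lp (i'<a) ! e)" i i']
    by (auto simp: ge_def lslot_def)
next
  case False
  then have "e = 14" using assms by simp
  then show ?thesis using assms blk_eq[of j 5 i i'] blk_eq[of j 0 i "(i'+1) mod N"]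
    by (auto simp: ge_def lslot_def)
qed

lemma prv_lt: "0 < N \<Longrightarrow> prv N i < N" by (simp add: prv_def)

lemma prv_iff: assumes "0 < N" "i < N" "i' < N" shows "i = (i'+1) mod N \<longleftrightarrow> i' = prv N i"
proof -
  have s: "(i'+1) mod N = (if i'+1 = N then 0 else i'+1)" using assms by auto
  have p: "prv N i = (if i = 0 then N - 1 else i - 1)"
  proof (cases "i = 0")
    case True then show ?thesis using assms by (simp add: prv_def)
  next
    case False
    then have "i + N - 1 = (i - 1) + N" by simp
    then have "prv N i = ((i - 1) + N) mod N" by (simp add: prv_def)
    also have "\<dots> = i - 1" using assms by simp
    finally show ?thesis using False by simp
  qed
  show ?thesis using s p assms by auto
qed

lemma ge_inj: assumes N: "2 \<le> N" and "i < N" "i' < N" "e < 15" "e' < 15" and eq: "ge N a i e = ge N a i' e'"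
  shows "i = i' \<and> e = e'"
proof -
  have nm: "(k+1) mod N \<noteq> k" if "k < N" for k
    using that N by (cases "k + 1 = N") auto
  have mem: "x \<in> ge N a i e \<longleftrightarrow> x \<in> ge N a i' e'" for x using eq by simp
  show ?thesis
  proof (cases "e < 14")
    case T1: True
    let ?f = "fst (lp (i<a) ! e)" and ?s = "snd (lp (i<a) ! e)"
    have o: "?f < ?s" "?s < 10" using lp_ord T1 by auto
    have in1: "10*i + ?f \<in> ge N a i e" "10*i + ?s \<in> ge N a i e" using T1 by (auto simp: ge_def)
    show ?thesis
    proof (cases "e' < 14")
      case T2: True
      have "10*i + ?f \<in> ge N a i' e'" using in1 mem by blast
      then have ii: "i' = i" using mem_ge[of i N ?f e' a i'] o T2 assms by auto
      let ?f' = "fst (lp (i<a) ! e')" and ?s' = "snd (lp (i<a) ! e')"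
      have o': "?f' < ?s'" "?s' < 10" using lp_ord T2 by auto
      have "{10*i + ?f, 10*i + ?s} = {10*i + ?f', 10*i + ?s'}" using eq ii T1 T2 by (simp add: ge_def)
      then have "(?f = ?f' \<and> ?s = ?s') \<or> (?f = ?s' \<and> ?s = ?f')" by (simp add: doubleton_eq_iff)
      then have "?f = ?f' \<and> ?s = ?s'" using o o' by auto
      then have "lp (i<a) ! e = lp (i<a) ! e'" by (simp add: prod_eq_iff)
      then have "e = e'" using nth_eq_iff_index_eq[OF lp_dist] lp_len T1 T2 by metis
      then show ?thesis using ii by simp
    next
      case F2: False
      then have e': "e' = 14" using assms by simp
      have a1: "10*i' + 5 \<in> ge N a i e" "10*((i'+1) mod N) + 0 \<in> ge N a i e"
        using mem e' by (auto simp: ge_def)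
      have "i = i'" using mem_ge[of i' N 5 e a i] a1(1) T1 assms by auto
      moreover have "i = (i'+1) mod N" using mem_ge[of "(i'+1) mod N" N 0 e a i] a1(2) T1 assms N by auto
      ultimately show ?thesis using nm assms by auto
    qed
  next
    case F1: False
    then have e: "e = 14" using assms by simp
    have "10*i + 5 \<in> ge N a i e" "10*((i+1) mod N) + 0 \<in> ge N a i e" using e by (simp_all add: ge_def)
    then have a1: "10*i + 5 \<in> ge N a i' e'" "10*((i+1) mod N) + 0 \<in> ge N a i' e'"
      using eq by simp_all
    show ?thesis
    proof (cases "e' < 14")
      case True
      have "i' = i" using mem_ge[of i N 5 e' a i'] a1(1) True assms by auto
      moreover have "i' = (i+1) mod N" using mem_ge[of "(i+1) mod N" N 0 e' a i'] a1(2) True assms N by auto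
      ultimately show ?thesis using nm assms by auto
    next
      case False
      then have "e' = 14" using assms by simp
      moreover have "i' = i" using mem_ge[of i N 5 e' a i'] a1(1) assms \<open>e' = 14\<close> by auto
      ultimately show ?thesis using e by simp
    qed
  qed
qed

definition IL :: "nat \<Rightarrow> nat \<Rightarrow> nat \<Rightarrow> nat \<Rightarrow> nat set list" where
  "IL N a i j = map (ge N a i) (inc (i<a) j) @ (if j = 0 then [ge N a (prv N i) 14] else [])"

lemma ge_in: "i < N \<Longrightarrow> e < 15 \<Longrightarrow> ge N a i e \<in> edges (Gr N a)"
  by (force simp: edges_Gr)

lemma edge_cases: "E \<in> edges (Gr N a) \<Longrightarrow> \<exists>i e. i < N \<and> e < 15 \<and> E = ge N a i e"
  by (auto simp: edges_Gr)

lemma inc_set: assumes N: "2 \<le> N" and i: "i < N" and j: "j < 10"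
  shows "{E \<in> edges (Gr N a). 10*i+j \<in> E} = set (IL N a i j)"
proof
  have ip: "\<forall>e\<in>set (inc (i<a) j). e < 15" using inc_prop j by blast
  have pl: "prv N i < N" using prv_lt N by simp
  show "{E \<in> edges (Gr N a). 10*i+j \<in> E} \<subseteq> set (IL N a i j)"
  proof
    fix E assume "E \<in> {E \<in> edges (Gr N a). 10*i+j \<in> E}"
    then obtain i' e where h: "i' < N" "e < 15" "E = ge N a i' e" "10*i+j \<in> E"
      using edge_cases by blast
    then have "(i' = i \<and> j \<in> lslot (i<a) e) \<or> (e = 14 \<and> j = 0 \<and> i = (i'+1) mod N)"
      using mem_ge[OF i j h(2)] by simp
    then show "E \<in> set (IL N a i j)"
    proof
      assume "i' = i \<and> j \<in> lslot (i<a) e"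
      then show ?thesis using slot_inc_all h j by (auto simp: IL_def)
    next
      assume "e = 14 \<and> j = 0 \<and> i = (i'+1) mod N"
      then show ?thesis using prv_iff[of N i i'] h i N by (auto simp: IL_def)
    qed
  qed
  show "set (IL N a i j) \<subseteq> {E \<in> edges (Gr N a). 10*i+j \<in> E}"
  proof
    fix E assume E: "E \<in> set (IL N a i j)"
    show "E \<in> {E \<in> edges (Gr N a). 10*i+j \<in> E}"
    proof (cases "E \<in> set (map (ge N a i) (inc (i<a) j))")
      case True
      then obtain e where e: "e \<in> set (inc (i<a) j)" "E = ge N a i e" by auto
      have "e < 15" using ip e by blast
      then show ?thesis using e ge_in[OF i] mem_ge[OF i j] slot_inc_all j by auto
    next
      case False
      then have "j = 0" "E = ge N a (prv N i) 14" using E by (auto simp: IL_def split: if_splits)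
      moreover have "i = (prv N i + 1) mod N" using prv_iff[of N i "prv N i"] pl i by simp
      ultimately show ?thesis using ge_in[OF pl] mem_ge[OF i j, of 14 a "prv N i"] by auto
    qed
  qed
qed

lemma IL_dist: assumes N: "2 \<le> N" and i: "i < N" and j: "j < 10"
  shows "distinct (IL N a i j)" and "length (IL N a i j) = 3"
proof -
  have ip: "\<forall>e\<in>set (inc (i<a) j). e < 15" "distinct (inc (i<a) j)"
     "length (inc (i<a) j) = (if j = 0 then 2 else 3)" "14 \<in> set (inc (i<a) j) \<longleftrightarrow> j = 5"
    using inc_prop j by blast+
  have pl: "prv N i < N" using prv_lt N by simp
  have inj: "inj_on (ge N a i) (set (inc (i<a) j))"
    by (rule inj_onI) (use ge_inj[OF N i i] ip in blast)
  have nin: "ge N a (prv N i) 14 \<notin> set (map (ge N a i) (inc (i<a) j))" if "j = 0"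
  proof
    assume "ge N a (prv N i) 14 \<in> set (map (ge N a i) (inc (i<a) j))"
    then obtain e where "e \<in> set (inc (i<a) j)" "ge N a (prv N i) 14 = ge N a i e" by auto
    then show False using ge_inj[OF N pl i, of 14 e a] ip that by auto
  qed
  show "distinct (IL N a i j)" using inj ip nin by (auto simp: IL_def distinct_map)
  show "length (IL N a i j) = 3" using ip by (simp add: IL_def)
qed

lemma vert_split: "(\<forall>v<10*(N::nat). P v) \<longleftrightarrow> (\<forall>i<N. \<forall>j<10. P (10*i+j))"
proof
  assume "\<forall>v<10*N. P v" then show "\<forall>i<N. \<forall>j<10. P (10*i+j)" by auto
next
  assume h: "\<forall>i<N. \<forall>j<10. P (10*i+j)"
  show "\<forall>v<10*N. P v"
  proof (intro allI impI)
    fix v assume "v < 10*N"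
    then have "v div 10 < N" "v mod 10 < 10" "v = 10*(v div 10) + v mod 10" by auto
    then show "P v" using h by metis
  qed
qed

lemma wf_Gr: assumes N: "2 \<le> N" shows "wf_graph (Gr N a)"
  unfolding wf_graph_def
proof (rule conjI)
  show "finite (verts (Gr N a))" by (simp add: verts_Gr)
  show "\<forall>E\<in>edges (Gr N a). E \<subseteq> verts (Gr N a) \<and> card E = 2"
  proof
  fix E assume "E \<in> edges (Gr N a)"
  then obtain i e where h: "i < N" "e < 15" "E = ge N a i e" using edge_cases by blast
  show "E \<subseteq> verts (Gr N a) \<and> card E = 2"
  proof (cases "e < 14")
    case True
    then have o: "fst (lp (i<a) ! e) < snd (lp (i<a) ! e)" "snd (lp (i<a) ! e) < 10" using lp_ord by auto
    have "10 * i + 10 \<le> 10 * N" using h by simp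
    then show ?thesis using h True o by (auto simp: ge_def verts_Gr)
  next
    case False
    then have "e = 14" using h by simp
    have m: "(i+1) mod N < N" using N by simp
    then have "10 * ((i+1) mod N) < 10 * N" by simp
    moreover have "10 * i + 5 < 10 * N" using h by simp
    moreover have "10*i+5 \<noteq> 10*((i+1) mod N)" using blk_eq[of 5 0 i "(i+1) mod N"] by simp
    ultimately show ?thesis using h \<open>e = 14\<close> by (auto simp: ge_def verts_Gr)
  qed
qed
qed

lemma deg_Gr: assumes N: "2 \<le> N" and v: "v \<in> verts (Gr N a)"
  shows "{E \<in> edges (Gr N a). v \<in> E} = set (IL N a (v div 10) (v mod 10))" "card {E \<in> edges (Gr N a). v \<in> E} = 3"
proof -
  have "v div 10 < N" "v mod 10 < 10" "v = 10*(v div 10) + v mod 10" using v by (auto simp: verts_Gr)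
  then show "{E \<in> edges (Gr N a). v \<in> E} = set (IL N a (v div 10) (v mod 10))"
    using inc_set[OF N] by metis
  then show "card {E \<in> edges (Gr N a). v \<in> E} = 3"
    using IL_dist[OF N \<open>v div 10 < N\<close> \<open>v mod 10 < 10\<close>] distinct_card by metis
qed

lemma cubic_Gr: "2 \<le> N \<Longrightarrow> cubic (Gr N a)"
  using deg_Gr by (simp add: cubic_def degree_def)

lemma one_len: "(one bs \<longleftrightarrow> length (filter id bs) = 1) \<and> (none bs \<longleftrightarrow> length (filter id bs) = 0)"
  by (induction bs) auto

lemma ex1_card: "(\<exists>!x. P x) \<longleftrightarrow> card {x. P x} = 1"
proof
  assume "\<exists>!x. P x"
  then obtain y where "\<forall>x. P x \<longleftrightarrow> x = y" by blast
  then have "{x. P x} = {y}" by blast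
  then show "card {x. P x} = 1" by simp
next
  assume "card {x. P x} = 1"
  then obtain y where "{x. P x} = {y}" using card_1_singleton_iff by (metis One_nat_def)
  then have "P y" "\<And>x. P x \<Longrightarrow> x = y" by auto
  then show "\<exists>!x. P x" by blast
qed

lemma ex1_IL: assumes N: "2 \<le> N" and i: "i < N" and j: "j < 10" and M: "M \<subseteq> edges (Gr N a)"
  shows "(\<exists>!E. E \<in> M \<and> 10*i+j \<in> E) \<longleftrightarrow> one (map (\<lambda>E. E \<in> M) (IL N a i j))"
proof -
  have "{E. E \<in> M \<and> 10*i+j \<in> E} = set (filter (\<lambda>E. E \<in> M) (IL N a i j))"
    using inc_set[OF N i j, of a] M by auto
  then have c: "card {E. E \<in> M \<and> 10*i+j \<in> E} = length (filter (\<lambda>E. E \<in> M) (IL N a i j))"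
    using IL_dist(1)[OF N i j, of a] by (metis distinct_card distinct_filter)
  have "length (filter (\<lambda>E. E \<in> M) (IL N a i j)) = length (filter id (map (\<lambda>E. E \<in> M) (IL N a i j)))"
    by (simp add: filter_map comp_def)
  then show ?thesis using c ex1_card[of "\<lambda>E. E \<in> M \<and> 10*i+j \<in> E"] one_len by simp
qed

lemma pm_iff: assumes N: "2 \<le> N" and M: "M \<subseteq> edges (Gr N a)"
  shows "perfect_matching (Gr N a) M \<longleftrightarrow> (\<forall>i<N. lok (i<a) (\<lambda>e. ge N a i e \<in> M) (ge N a (prv N i) 14 \<in> M))"
proof -
  have "perfect_matching (Gr N a) M \<longleftrightarrow> (\<forall>v<10*N. \<exists>!E. E \<in> M \<and> v \<in> E)"
    using M by (auto simp: perfect_matching_def verts_Gr)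
  also have "\<dots> \<longleftrightarrow> (\<forall>i<N. \<forall>j<10. \<exists>!E. E \<in> M \<and> 10*i+j \<in> E)" by (rule vert_split)
  also have "\<dots> \<longleftrightarrow> (\<forall>i<N. \<forall>j<10. one (map (\<lambda>E. E \<in> M) (IL N a i j)))"
    using ex1_IL[OF N _ _ M] by auto
  also have "\<dots> \<longleftrightarrow> (\<forall>i<N. lok (i<a) (\<lambda>e. ge N a i e \<in> M) (ge N a (prv N i) 14 \<in> M))"
    by (simp add: lok_def IL_def comp_def)
  finally show ?thesis .
qed

lemma card_U: assumes N: "2 \<le> N" and U: "U \<subseteq> edges (Gr N a)"
  shows "card U = (\<Sum>i<N. card {e. e < 15 \<and> ge N a i e \<in> U})"
proof -
  let ?S = "SIGMA i:{..<N}. {e. e < 15 \<and> ge N a i e \<in> U}"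
  have inj: "inj_on (\<lambda>(i,e). ge N a i e) ?S"
    by (rule inj_onI) (use ge_inj[OF N] in auto)
  have img: "(\<lambda>(i,e). ge N a i e) ` ?S = U"
  proof
    show "(\<lambda>(i,e). ge N a i e) ` ?S \<subseteq> U" by auto
    show "U \<subseteq> (\<lambda>(i,e). ge N a i e) ` ?S"
    proof
      fix E assume "E \<in> U"
      then obtain i e where "i < N" "e < 15" "E = ge N a i e" using U edge_cases by blast
      then show "E \<in> (\<lambda>(i,e). ge N a i e) ` ?S" using \<open>E \<in> U\<close> by force
    qed
  qed
  have "card U = card ?S" using card_image[OF inj] img by simp
  also have "\<dots> = (\<Sum>i<N. card {e. e < 15 \<and> ge N a i e \<in> U})" by (rule card_SigmaI) auto
  finally show ?thesis .
qed

lemma pp_lt: "\<forall>k<6. \<forall>e\<in>set (pp k). e < 15"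
  unfolding all6 by (simp add: pp_def)

lemma sum_if: "(\<Sum>i<N. if i < a then 12 else 15::nat) = 12*min a N + 15*(N - min a N)"
  by (induction N) (auto simp: min_def)

lemma upper: assumes N: "2 \<le> N" and a: "a \<le> N"
  and pm: "perfect_matching (Gr N a) M1" "perfect_matching (Gr N a) M2" "perfect_matching (Gr N a) M3"
  shows "card (M1 \<union> M2 \<union> M3) \<le> 12*a + 15*(N-a)"
proof -
  have Ms: "M1 \<subseteq> edges (Gr N a)" "M2 \<subseteq> edges (Gr N a)" "M3 \<subseteq> edges (Gr N a)"
    using pm by (simp_all add: perfect_matching_def)
  let ?U = "M1 \<union> M2 \<union> M3"
  have blk: "card {e. e < 15 \<and> ge N a i e \<in> ?U} \<le> (if i < a then 12 else 15)" if i: "i < N" for i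
  proof (cases "i < a")
    case True
    have l: "lok True (\<lambda>e. ge N a i e \<in> M1) (ge N a (prv N i) 14 \<in> M1)"
      "lok True (\<lambda>e. ge N a i e \<in> M2) (ge N a (prv N i) 14 \<in> M2)"
      "lok True (\<lambda>e. ge N a i e \<in> M3) (ge N a (prv N i) 14 \<in> M3)"
      using pm pm_iff[OF N] Ms i True by auto
    obtain k1 where k1: "k1 < 6" "\<forall>e<15. (ge N a i e \<in> M1) \<longleftrightarrow> e \<in> set (pp k1)" using pat[OF l(1)] by blast
    obtain k2 where k2: "k2 < 6" "\<forall>e<15. (ge N a i e \<in> M2) \<longleftrightarrow> e \<in> set (pp k2)" using pat[OF l(2)] by blast
    obtain k3 where k3: "k3 < 6" "\<forall>e<15. (ge N a i e \<in> M3) \<longleftrightarrow> e \<in> set (pp k3)" using pat[OF l(3)] by blast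
    have "{e. e < 15 \<and> ge N a i e \<in> ?U} = set (pp k1 @ pp k2 @ pp k3)"
      using k1 k2 k3 pp_lt by auto
    then have "card {e. e < 15 \<and> ge N a i e \<in> ?U} = length (remdups (pp k1 @ pp k2 @ pp k3))"
      using card_set[of "pp k1 @ pp k2 @ pp k3"] by simp
    also have "\<dots> \<le> 12" using triple0 k1 k2 k3 by blast
    finally show ?thesis using True by simp
  next
    case False
    have "card {e. e < 15 \<and> ge N a i e \<in> ?U} \<le> card {..<15::nat}" by (rule card_mono) auto
    then show ?thesis using False by simp
  qed
  have "card ?U = (\<Sum>i<N. card {e. e < 15 \<and> ge N a i e \<in> ?U})" using card_U[OF N] Ms by auto
  also have "\<dots> \<le> (\<Sum>i<N. if i < a then 12 else 15)" by (rule sum_mono) (use blk in auto)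
  also have "\<dots> = 12*a + 15*(N-a)" using sum_if a by (simp add: min_def)
  finally show ?thesis .
qed

definition cp :: "nat \<Rightarrow> bool \<Rightarrow> nat list" where
  "cp k T = (if k = 0 then [1,3,10,12,14] else if k = 1 then (if T then [1,4,7,9,11] else [0,2,8,9,11])
     else (if T then [2,4,5,10,13] else [4,5,6,7,13]))"

lemma all3: "(\<forall>e<(3::nat). P e) \<longleftrightarrow> P 0 \<and> P 1 \<and> P 2"
  by (simp add: numeral_eq_Suc All_less_Suc conj_ac)

lemma cp_ok: "\<forall>k<3. lok T (\<lambda>e. e \<in> set (cp k T)) (14 \<in> set (cp k T')) \<and> (\<forall>e\<in>set (cp k T). e < 15)"
  unfolding all3 lok_def all10 by (cases T; cases T') (simp_all add: cp_def inc_def)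

lemma cp_card: "card (set (cp 0 T @ cp 1 T @ cp 2 T)) = (if T then 12 else 15)"
  unfolding card_set by (cases T) (simp_all add: cp_def)

lemma lok_cong: assumes "\<forall>e<15. x e = x' e" shows "lok T x y = lok T x' y"
proof -
  have "\<forall>j<10. map x (inc T j) = map x' (inc T j)" using inc_prop assms by (simp add: map_eq_conv)
  then show ?thesis unfolding lok_def by (metis (no_types, lifting))
qed

definition MM :: "nat \<Rightarrow> nat \<Rightarrow> nat \<Rightarrow> nat set set" where
  "MM N a k = (\<lambda>(i,e). ge N a i e) ` (SIGMA i:{..<N}. set (cp k (i<a)))"

lemma memM: assumes N: "2 \<le> N" and k: "k < 3" and i: "i < N" and e: "e < 15"
  shows "ge N a i e \<in> MM N a k \<longleftrightarrow> e \<in> set (cp k (i<a))"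
proof
  assume "ge N a i e \<in> MM N a k"
  then obtain i' e' where h: "i' < N" "e' \<in> set (cp k (i'<a))" "ge N a i e = ge N a i' e'"
    by (auto simp: MM_def)
  then have "e' < 15" using cp_ok k by blast
  then have "i = i' \<and> e = e'" using ge_inj[OF N i h(1) e] h by blast
  then show "e \<in> set (cp k (i<a))" using h by simp
qed (use i in \<open>force simp: MM_def\<close>)

lemma MM_sub: assumes k: "k < 3" shows "MM N a k \<subseteq> edges (Gr N a)"
proof
  fix E assume "E \<in> MM N a k"
  then obtain i e where "i < N" "e \<in> set (cp k (i<a))" "E = ge N a i e" by (auto simp: MM_def)
  then show "E \<in> edges (Gr N a)" using cp_ok k ge_in by blast
qed

lemma MM_pm: assumes N: "2 \<le> N" and k: "k < 3" shows "perfect_matching (Gr N a) (MM N a k)"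
proof -
  have "lok (i<a) (\<lambda>e. ge N a i e \<in> MM N a k) (ge N a (prv N i) 14 \<in> MM N a k)" if i: "i < N" for i
  proof -
    have pl: "prv N i < N" using prv_lt N by simp
    have "lok (i<a) (\<lambda>e. ge N a i e \<in> MM N a k) (ge N a (prv N i) 14 \<in> MM N a k)
       = lok (i<a) (\<lambda>e. e \<in> set (cp k (i<a))) (14 \<in> set (cp k (prv N i < a)))"
      using memM[OF N k i] memM[OF N k pl, of 14] lok_cong by simp
    then show ?thesis using cp_ok k by simp
  qed
  then show ?thesis using pm_iff[OF N MM_sub[OF k]] by simp
qed

lemma lower: assumes N: "2 \<le> N" and a: "a \<le> N"
  shows "card (MM N a 0 \<union> MM N a 1 \<union> MM N a 2) = 12*a + 15*(N-a)"
proof -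
  let ?U = "MM N a 0 \<union> MM N a 1 \<union> MM N a 2"
  have U: "?U \<subseteq> edges (Gr N a)" using MM_sub by auto
  have blk: "{e. e < 15 \<and> ge N a i e \<in> ?U} = set (cp 0 (i<a) @ cp 1 (i<a) @ cp 2 (i<a))" if i: "i < N" for i
  proof -
    have b: "\<forall>e\<in>set (cp 0 (i<a)) \<union> set (cp 1 (i<a)) \<union> set (cp 2 (i<a)). e < 15"
      by (cases "i<a") (auto simp: cp_def)
    have "\<forall>e<15. ge N a i e \<in> ?U \<longleftrightarrow> e \<in> set (cp 0 (i<a)) \<or> e \<in> set (cp 1 (i<a)) \<or> e \<in> set (cp 2 (i<a))"
      using memM[OF N _ i, of 0 _ a] memM[OF N _ i, of 1 _ a] memM[OF N _ i, of 2 _ a] by auto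
    then show ?thesis using b by auto
  qed
  have "card ?U = (\<Sum>i<N. card {e. e < 15 \<and> ge N a i e \<in> ?U})" using card_U[OF N U] .
  also have "\<dots> = (\<Sum>i<N. if i < a then 12 else 15)" using blk cp_card by (intro sum.cong) auto
  also have "\<dots> = 12*a + 15*(N-a)" using sum_if a by (simp add: min_def)
  finally show ?thesis .
qed

lemma card_E: assumes N: "2 \<le> N" shows "card (edges (Gr N a)) = 15 * N"
proof -
  have "card (edges (Gr N a)) = (\<Sum>i<N. card {e. e < 15 \<and> ge N a i e \<in> edges (Gr N a)})"
    using card_U[OF N] by blast
  also have "\<dots> = (\<Sum>i<N. 15)"
  proof (rule sum.cong)
    fix i assume "i \<in> {..<N}"
    then have "{e. e < 15 \<and> ge N a i e \<in> edges (Gr N a)} = {..<15}" using ge_in by auto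
    then show "card {e. e < 15 \<and> ge N a i e \<in> edges (Gr N a)} = 15" by simp
  qed simp
  finally show ?thesis by simp
qed

lemma m3_Gr: assumes N: "2 \<le> N" and a: "a \<le> N"
  shows "m3 (Gr N a) = real (12*a + 15*(N-a)) / real (15*N)"
proof -
  let ?A = "{card (M1 \<union> M2 \<union> M3) | M1 M2 M3. perfect_matching (Gr N a) M1 \<and>
       perfect_matching (Gr N a) M2 \<and> perfect_matching (Gr N a) M3}"
  have fe: "finite (edges (Gr N a))" by (simp add: edges_Gr)
  have "?A \<subseteq> {..card (edges (Gr N a))}"
  proof
    fix x assume "x \<in> ?A"
    then obtain M1 M2 M3 where h: "x = card (M1 \<union> M2 \<union> M3)" "perfect_matching (Gr N a) M1"
       "perfect_matching (Gr N a) M2" "perfect_matching (Gr N a) M3" by blast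
    then have "M1 \<union> M2 \<union> M3 \<subseteq> edges (Gr N a)" by (auto simp: perfect_matching_def)
    then show "x \<in> {..card (edges (Gr N a))}" using h card_mono[OF fe] by auto
  qed
  then have fin: "finite ?A" using finite_subset by blast
  have "Max ?A = 12*a + 15*(N-a)"
  proof (rule Max_eqI[OF fin])
    fix y assume "y \<in> ?A" then show "y \<le> 12*a + 15*(N-a)" using upper[OF N a] by blast
  next
    have "perfect_matching (Gr N a) (MM N a 0)" "perfect_matching (Gr N a) (MM N a 1)"
      "perfect_matching (Gr N a) (MM N a 2)" using MM_pm[OF N] by auto
    then show "12*a + 15*(N-a) \<in> ?A" using lower[OF N a, symmetric] by blast
  qed
  then show ?thesis using card_E[OF N] by (simp add: m3_def)
qed

definition partbl :: "bool \<Rightarrow> nat list list" where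
  "partbl T = (if T then [[0,2,7,8,9,5,8,5,5,7],[0,0,7,4,0,5,8,5,5,4],[0,0,0,4,0,5,1,5,5,4],[0,0,1,0,0,5,1,5,5,4],[0,0,1,8,0,5,1,5,5,7],[0,0,1,4,0,0,1,2,6,4],[0,0,1,4,0,5,0,5,5,4],[0,0,1,4,0,5,1,0,5,4],[0,0,1,4,0,5,1,5,0,4],[0,0,1,4,0,5,1,5,5,0],[0,0,1,4,0,7,1,2,6,4]] else [[0,6,1,4,9,5,5,6,9,5],[0,0,3,4,0,5,5,6,9,5],[0,0,0,4,0,5,5,6,9,5],[0,0,1,0,0,5,5,6,9,5],[0,0,1,2,0,5,5,6,9,5],[0,0,1,4,0,0,1,2,3,4],[0,0,1,4,0,5,0,2,9,5],[0,0,1,4,0,5,5,0,9,5],[0,0,1,4,0,5,5,6,0,5],[0,0,1,4,0,5,5,6,3,0],[0,0,1,4,0,6,1,2,3,4]])"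
definition rktbl :: "bool \<Rightarrow> nat list list" where
  "rktbl T = (if T then [[0,3,2,2,3,0,2,1,1,2],[0,0,2,2,1,0,2,1,1,2],[0,1,0,2,1,0,2,1,1,2],[0,1,2,0,1,0,2,1,1,2],[0,1,2,2,0,0,2,1,1,2],[0,1,2,2,1,0,2,3,3,2],[0,1,2,2,1,0,0,1,1,2],[0,1,2,2,1,0,2,0,1,2],[0,1,2,2,1,0,2,1,0,2],[0,1,2,2,1,0,2,1,1,0],[0,1,2,2,1,4,2,3,3,2]] else [[0,2,3,3,2,0,1,2,2,1],[0,0,3,2,1,0,1,2,2,1],[0,1,0,2,1,0,1,2,2,1],[0,1,2,0,1,0,1,2,2,1],[0,1,2,3,0,0,1,2,2,1],[0,1,2,2,1,0,2,3,3,2],[0,1,2,2,1,0,0,3,2,1],[0,1,2,2,1,0,1,0,2,1],[0,1,2,2,1,0,1,2,0,1],[0,1,2,2,1,0,1,2,3,0],[0,1,2,2,1,3,2,3,3,2]])"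
definition par :: "bool \<Rightarrow> nat \<Rightarrow> nat \<Rightarrow> nat" where "par T w j = partbl T ! w ! j"
definition rk :: "bool \<Rightarrow> nat \<Rightarrow> nat \<Rightarrow> nat" where "rk T w j = rktbl T ! w ! j"
definition isroot :: "nat \<Rightarrow> nat \<Rightarrow> bool" where
  "isroot w j = ((j = 0 \<and> w \<noteq> 0) \<or> (j = 5 \<and> w \<noteq> 5 \<and> w \<noteq> 10))"

lemma loc_par: "\<forall>w<11. \<forall>j<10. j \<noteq> w \<and> \<not> isroot w j \<longrightarrow>
   ((j, par T w j) \<in> set (lp T) \<or> (par T w j, j) \<in> set (lp T)) \<and> par T w j \<noteq> w \<and> par T w j < 10
   \<and> rk T w (par T w j) < rk T w j"
  unfolding all11 all10 by (cases T) (simp_all add: par_def rk_def partbl_def rktbl_def isroot_def lp_def)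

lemma adj_iff: "(u, v) \<in> adj G \<longleftrightarrow> {u, v} \<in> edges G" by (simp add: adj_def)
lemma edges_del: "edges (delete_vertex G x) = {e \<in> edges G. x \<notin> e}" by (simp add: delete_vertex_def edges_def)
lemma verts_del: "verts (delete_vertex G x) = verts G - {x}" by (simp add: delete_vertex_def verts_def)
lemma edges_dele: "edges (delete_edge G f) = edges G - {f}" by (simp add: delete_edge_def edges_def)
lemma verts_dele: "verts (delete_edge G f) = verts G" by (simp add: delete_edge_def verts_def)

lemma adj_sym: "(u, v) \<in> adj G \<Longrightarrow> (v, u) \<in> adj G" by (simp add: adj_def insert_commute)

lemma rt_sym: "(u, v) \<in> (adj G)\<^sup>* \<Longrightarrow> (v, u) \<in> (adj G)\<^sup>*"
proof -
  have "sym (adj G)" by (auto simp: sym_def intro: adj_sym)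
  then have "sym ((adj G)\<^sup>*)" by (rule sym_rtrancl)
  then show "(u, v) \<in> (adj G)\<^sup>* \<Longrightarrow> (v, u) \<in> (adj G)\<^sup>*" by (auto simp: sym_def)
qed

lemma adj_D: assumes i: "i < N" and jk: "(j,k) \<in> set (lp (i<a))" and x: "x \<noteq> 10*i+j" "x \<noteq> 10*i+k"
  shows "(10*i+j, 10*i+k) \<in> adj (delete_vertex (Gr N a) x)" "(10*i+k, 10*i+j) \<in> adj (delete_vertex (Gr N a) x)"
proof -
  obtain e where e: "e < 14" "lp (i<a) ! e = (j,k)" using jk lp_len by (metis in_set_conv_nth)
  then have "ge N a i e = {10*i+j, 10*i+k}" by (simp add: ge_def)
  moreover have "ge N a i e \<in> edges (Gr N a)" using ge_in i e by simp
  ultimately show "(10*i+j, 10*i+k) \<in> adj (delete_vertex (Gr N a) x)"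
    using x by (simp add: adj_iff edges_del)
  then show "(10*i+k, 10*i+j) \<in> adj (delete_vertex (Gr N a) x)" by (rule adj_sym)
qed

lemma conn_edge: assumes c: "c < N" and x: "x \<noteq> 10*c+5" "x \<noteq> 10*((c+1) mod N)"
  shows "(10*c+5, 10*((c+1) mod N)) \<in> adj (delete_vertex (Gr N a) x)"
proof -
  have "ge N a c 14 = {10*c+5, 10*((c+1) mod N)}" by (simp add: ge_def)
  moreover have "ge N a c 14 \<in> edges (Gr N a)" using ge_in c by simp
  ultimately show ?thesis using x by (simp add: adj_iff edges_del)
qed

lemma reach_blk: assumes i: "i < N" and w: "w \<le> 10" and hx: "\<forall>j<10. (10*i+j = x) \<longleftrightarrow> j = w"
  shows "j < 10 \<Longrightarrow> j \<noteq> w \<Longrightarrow> \<exists>r. isroot w r \<and> (10*i+j, 10*i+r) \<in> (adj (delete_vertex (Gr N a) x))\<^sup>*"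
proof -
  let ?R = "adj (delete_vertex (Gr N a) x)"
  have "\<forall>j. rk (i<a) w j = n \<longrightarrow> j < 10 \<longrightarrow> j \<noteq> w \<longrightarrow> (\<exists>r. isroot w r \<and> (10*i+j, 10*i+r) \<in> ?R\<^sup>*)" for n
  proof (induction n rule: less_induct)
    case (less n)
    show ?case
    proof (intro allI impI)
      fix j assume h: "rk (i<a) w j = n" "j < 10" "j \<noteq> w"
      show "\<exists>r. isroot w r \<and> (10*i+j, 10*i+r) \<in> ?R\<^sup>*"
      proof (cases "isroot w j")
        case True then show ?thesis by blast
      next
        case False
        let ?p = "par (i<a) w j"
        have w11: "w < 11" using w by simp
        have P: "((j, ?p) \<in> set (lp (i<a)) \<or> (?p, j) \<in> set (lp (i<a))) \<and> ?p \<noteq> w \<and> ?p < 10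
           \<and> rk (i<a) w ?p < rk (i<a) w j" using loc_par[of "i<a"] w11 h(2,3) False by blast
        have IH: "\<exists>r. isroot w r \<and> (10*i+?p, 10*i+r) \<in> ?R\<^sup>*"
          using less.IH[of "rk (i<a) w ?p"] P h(1) by blast
        then obtain r where r: "isroot w r" "(10*i+?p, 10*i+r) \<in> ?R\<^sup>*" by blast
        have xj1: "x \<noteq> 10*i+j" using hx[rule_format, OF h(2)] h(3) by auto
        have "?p < 10" "?p \<noteq> w" using P by auto
        then have xj2: "x \<noteq> 10*i+?p" using hx[rule_format, of ?p] by auto
        note xj = xj1 xj2
        have "(10*i+j, 10*i+?p) \<in> ?R"
        proof (cases "(j, ?p) \<in> set (lp (i<a))")
          case True show ?thesis using adj_D(1)[OF i True xj] .
        next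
          case False then have "(?p, j) \<in> set (lp (i<a))" using P by blast
          from adj_D(2)[OF i this xj(2) xj(1)] show ?thesis .
        qed
        then have "(10*i+j, 10*i+r) \<in> ?R\<^sup>*" using r(2) by (rule converse_rtrancl_into_rtrancl)
        then show ?thesis using r(1) by blast
      qed
    qed
  qed
  then show "j < 10 \<Longrightarrow> j \<noteq> w \<Longrightarrow> \<exists>r. isroot w r \<and> (10*i+j, 10*i+r) \<in> ?R\<^sup>*" by blast
qed

lemma M3: assumes "(b::nat) < N" "k + 1 < N" shows "(b+1+k) mod N \<noteq> b"
proof (cases "b+1+k < N")
  case True then show ?thesis by simp
next
  case False
  then have "(b+1+k) mod N = b+1+k-N" using assms by (simp add: mod_if)
  then show ?thesis using assms False by simp
qed

lemma M2: assumes "(b::nat) < N" "i < N" "i \<noteq> b" shows "\<exists>k. k+1 < N \<and> i = (b+1+k) mod N"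
proof (cases "b < i")
  case True
  then show ?thesis using assms by (intro exI[of _ "i-b-1"]) auto
next
  case False
  then have "i < b" using assms by simp
  moreover have "b+1+(N-b-1+i) = N + i" using assms by simp
  ultimately show ?thesis using assms by (intro exI[of _ "N-b-1+i"]) auto
qed

lemma conn_del: assumes N: "2 \<le> N" and x: "x < 10*N" shows "connected_graph (delete_vertex (Gr N a) x)"
proof -
  let ?R = "adj (delete_vertex (Gr N a) x)"
  define b where "b = x div 10"
  define w where "w = x mod 10"
  have xb: "x = 10*b+w" "b < N" "w < 10" using x by (auto simp: b_def w_def)
  define base where "base = 10*((b+1) mod N)"
  have intact: "(10*i+j, 10*i) \<in> ?R\<^sup>*" if "i < N" "i \<noteq> b" "j < 10" for i j
  proof -
    have hx: "\<forall>j<10. (10*i+j = x) \<longleftrightarrow> j = 10" using xb blk_eq that by auto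
    have "\<exists>r. isroot 10 r \<and> (10*i+j, 10*i+r) \<in> ?R\<^sup>*"
      by (rule reach_blk[of i N 10 x j a]) (use that hx in simp_all)
    then obtain r where "isroot 10 r" "(10*i+j, 10*i+r) \<in> ?R\<^sup>*" by blast
    then show ?thesis by (simp add: isroot_def)
  qed
  have A: "k+1 < N \<longrightarrow> (10*((b+1+k) mod N), base) \<in> ?R\<^sup>*" for k
  proof (induction k)
    case 0 then show ?case by (simp add: base_def)
  next
    case (Suc k)
    show ?case
    proof
      assume k: "Suc k + 1 < N"
      define c where "c = (b+1+k) mod N"
      have cN: "c < N" using N by (simp add: c_def)
      have cb: "c \<noteq> b" using M3[OF xb(2), of k] k by (simp add: c_def)
      have c1: "(c+1) mod N = (b+1+Suc k) mod N" by (simp add: c_def mod_Suc_eq)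
      have c1b: "(c+1) mod N \<noteq> b" using M3[OF xb(2) k] c1 by simp
      have x1: "x \<noteq> 10*c+5" using xb cb blk_eq by auto
      have x2: "x \<noteq> 10*((c+1) mod N)" using xb c1b blk_eq[of w 0 b "(c+1) mod N"] by auto
      have e1: "(10*((c+1) mod N), 10*c+5) \<in> ?R" using conn_edge[OF cN x1 x2] adj_sym by blast
      have e2: "(10*c+5, 10*c) \<in> ?R\<^sup>*" using intact[OF cN cb] by simp
      have e3: "(10*c, base) \<in> ?R\<^sup>*" using Suc k by (simp add: c_def)
      show "(10*((b+1+Suc k) mod N), base) \<in> ?R\<^sup>*" using e1 e2 e3 c1
        by (metis (no_types, lifting) converse_rtrancl_into_rtrancl rtrancl_trans)
    qed
  qed
  have B: "(10*i+j, base) \<in> ?R\<^sup>*" if hh: "i < N" "i \<noteq> b" "j < 10" for i j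
  proof -
    obtain k where k: "k+1 < N" "i = (b+1+k) mod N" using M2[OF xb(2) hh(1,2)] by blast
    show ?thesis using intact[OF hh] A[of k] k by (metis rtrancl_trans)
  qed
  have allb: "(u, base) \<in> ?R\<^sup>*" if u: "u \<in> verts (delete_vertex (Gr N a) x)" for u
  proof -
    have u1: "u < 10*N" "u \<noteq> x" using u by (auto simp: verts_del verts_Gr)
    define i where "i = u div 10"
    define j where "j = u mod 10"
    have ui: "u = 10*i+j" "i < N" "j < 10" using u1 by (auto simp: i_def j_def)
    show ?thesis
    proof (cases "i = b")
      case False then show ?thesis using B ui by simp
    next
      case True
      then have jw: "j \<noteq> w" using ui xb u1 by auto
      have hx: "\<forall>j<10. (10*b+j = x) \<longleftrightarrow> j = w" using xb blk_eq by auto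
      obtain r where r: "isroot w r" "(10*b+j, 10*b+r) \<in> ?R\<^sup>*"
        using reach_blk[OF xb(2) _ hx ui(3) jw] xb by auto
      have b1: "(b+1) mod N \<noteq> b" using M3[OF xb(2), of 0] N by simp
      have "(10*b+r, base) \<in> ?R\<^sup>*"
      proof (cases "r = 5")
        case True
        then have "w \<noteq> 5" using r by (simp add: isroot_def)
        then have x1: "x \<noteq> 10*b+5" using xb blk_eq by auto
        have x2: "x \<noteq> 10*((b+1) mod N)" using xb b1 blk_eq[of w 0 b "(b+1) mod N"] by auto
        show ?thesis using conn_edge[OF xb(2) x1 x2, of a] True by (simp add: base_def r_into_rtrancl)
      next
        case False
        then have r0: "r = 0" "w \<noteq> 0" using r by (auto simp: isroot_def)
        define p where "p = prv N b"
        have pN: "p < N" using prv_lt N by (simp add: p_def)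
        have pb1: "b = (p+1) mod N" using prv_iff[of N b p] pN xb N by (simp add: p_def)
        have pb: "p \<noteq> b" using M3[OF pN, of 0] N pb1 by auto
        have x1: "x \<noteq> 10*p+5" using xb pb blk_eq by auto
        have x2: "x \<noteq> 10*((p+1) mod N)" using xb r0 pb1 blk_eq[of w 0 b b] by auto
        have "(10*p+5, 10*b) \<in> ?R" using conn_edge[OF pN x1 x2] pb1 by simp
        then have "(10*b, 10*p+5) \<in> ?R" by (rule adj_sym)
        moreover have "(10*p+5, base) \<in> ?R\<^sup>*" using B[OF pN pb] by simp
        ultimately show ?thesis using r0 by (simp add: converse_rtrancl_into_rtrancl)
      qed
      then show ?thesis using r ui True by (metis rtrancl_trans)
    qed
  qed
  have ne: "verts (delete_vertex (Gr N a) x) \<noteq> {}"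
  proof -
    have "0 \<in> verts (delete_vertex (Gr N a) x) \<or> 1 \<in> verts (delete_vertex (Gr N a) x)"
      using N by (auto simp: verts_del verts_Gr)
    then show ?thesis by blast
  qed
  show ?thesis unfolding connected_graph_def
    using ne allb rt_sym by (metis rtrancl_trans)
qed

lemma cubic_nb: assumes wf: "wf_graph G" and cu: "cubic G" and v: "v \<in> verts G"
  shows "\<exists>y. {v,y} \<in> edges G \<and> y \<noteq> v \<and> y \<noteq> u \<and> y \<in> verts G"
proof -
  let ?I = "{e \<in> edges G. v \<in> e}"
  have c: "card ?I = 3" using cu v by (simp add: cubic_def degree_def)
  have "?I - {{v,u}} \<noteq> {}"
  proof
    assume "?I - {{v,u}} = {}"
    then have "?I \<subseteq> {{v,u}}" by blast
    then have "card ?I \<le> card {{v,u}}" by (rule card_mono[rotated]) simp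
    with c show False by simp
  qed
  then obtain E where E: "E \<in> edges G" "v \<in> E" "E \<noteq> {v,u}" by blast
  have Ev: "E \<subseteq> verts G" "card E = 2" using wf E by (auto simp: wf_graph_def)
  then obtain x y where xy: "E = {x,y}" "x \<noteq> y" by (auto simp: card_2_iff)
  then have "\<exists>z. E = {v,z} \<and> z \<noteq> v" using E(2) by (metis insert_commute insertE singletonD)
  then obtain z where z: "E = {v,z}" "z \<noteq> v" by blast
  then have "z \<noteq> u" using E(3) by auto
  moreover have "z \<in> verts G" using Ev z by auto
  ultimately show ?thesis using z E(1) by blast
qed

lemma conn_from_del: assumes c: "connected_graph (delete_vertex G x)" and x: "x \<in> verts G"
  and nb: "{x,y} \<in> edges G" "y \<noteq> x" "y \<in> verts G" shows "connected_graph G"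
proof -
  have "adj (delete_vertex G x) \<subseteq> adj G" by (auto simp: adj_iff edges_del)
  then have m: "(adj (delete_vertex G x))\<^sup>* \<subseteq> (adj G)\<^sup>*" by (rule rtrancl_mono)
  have r: "(u,y) \<in> (adj G)\<^sup>*" if u: "u \<in> verts G" for u
  proof (cases "u = x")
    case True then show ?thesis using nb(1) by (simp add: adj_iff r_into_rtrancl)
  next
    case False
    then have "u \<in> verts (delete_vertex G x)" "y \<in> verts (delete_vertex G x)" using u nb by (auto simp: verts_del)
    then have "(u,y) \<in> (adj (delete_vertex G x))\<^sup>*" using c by (auto simp: connected_graph_def)
    then show ?thesis using m by blast
  qed
  have "verts G \<noteq> {}" using x by blast
  moreover have "(u,v) \<in> (adj G)\<^sup>*" if "u \<in> verts G" "v \<in> verts G" for u v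
    using r[OF that(1)] rt_sym[OF r[OF that(2)]] by (rule rtrancl_trans)
  ultimately show ?thesis unfolding connected_graph_def by blast
qed

lemma bridgeless_gen: assumes wf: "wf_graph G" and cu: "cubic G"
  and dc: "\<forall>v\<in>verts G. connected_graph (delete_vertex G v)"
  shows "bridgeless G"
  unfolding bridgeless_def
proof (intro allI impI)
  fix u v assume e: "{u,v} \<in> edges G"
  have "{u,v} \<subseteq> verts G" "card {u,v} = 2" using wf e by (auto simp: wf_graph_def)
  then have uv: "u \<in> verts G" "v \<in> verts G" "u \<noteq> v" by (auto simp: card_insert_if split: if_splits)
  obtain y where y: "{u,y} \<in> edges G" "y \<noteq> u" "y \<noteq> v" "y \<in> verts G" using cubic_nb[OF wf cu uv(1), of v] by blast
  have "y \<in> verts (delete_vertex G u)" "v \<in> verts (delete_vertex G u)" using uv y by (auto simp: verts_del)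
  then have "(y,v) \<in> (adj (delete_vertex G u))\<^sup>*" using dc uv(1) by (auto simp: connected_graph_def)
  moreover have "adj (delete_vertex G u) \<subseteq> adj (delete_edge G {u,v})" by (auto simp: adj_iff edges_del edges_dele)
  ultimately have "(y,v) \<in> (adj (delete_edge G {u,v}))\<^sup>*" using rtrancl_mono by blast
  moreover have "(u,y) \<in> adj (delete_edge G {u,v})" using y by (auto simp: adj_iff edges_dele doubleton_eq_iff)
  ultimately show "(u,v) \<in> (adj (delete_edge G {u,v}))\<^sup>*" by (rule converse_rtrancl_into_rtrancl[rotated])
qed

lemma Gr_good: assumes N: "2 \<le> N"
  shows "wf_graph (Gr N a) \<and> cubic (Gr N a) \<and> two_connected (Gr N a) \<and> bridgeless (Gr N a)"
proof -
  have wf: "wf_graph (Gr N a)" using wf_Gr[OF N] .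
  have cu: "cubic (Gr N a)" using cubic_Gr[OF N] .
  have dc: "\<forall>v\<in>verts (Gr N a). connected_graph (delete_vertex (Gr N a) v)"
    using conn_del[OF N] by (simp add: verts_Gr)
  have z: "0 \<in> verts (Gr N a)" using N by (simp add: verts_Gr)
  obtain y where y: "{0,y} \<in> edges (Gr N a)" "y \<noteq> 0" "y \<in> verts (Gr N a)"
    using cubic_nb[OF wf cu z, of 0] by blast
  have c: "connected_graph (Gr N a)" using conn_from_del[OF _ z y] dc z by blast
  have "card (verts (Gr N a)) \<ge> 3" using N by (simp add: verts_Gr)
  then show ?thesis using wf cu dc c bridgeless_gen[OF wf cu dc] by (simp add: two_connected_def)
qed

lemma ratio: assumes PQ: "4*Q \<le> 5*P" "P < Q" and t: "0 < t"
  shows "real (12*(5*(Q-P)*t) + 15*(Q*t - 5*(Q-P)*t)) / real (15*(Q*t)) = real P / real Q"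
proof -
  obtain D where D: "Q = P + D" using PQ by (metis less_imp_add_positive)
  have le: "5*D*t \<le> Q*t" using PQ D by simp
  have QP: "Q - P = D" using D by simp
  have "real (12*(5*(Q-P)*t) + 15*(Q*t - 5*(Q-P)*t)) = real (12*(5*D*t)) + 15*(real (Q*t) - real (5*D*t))"
    unfolding QP using le by (simp add: of_nat_diff)
  also have "\<dots> = 15 * real P * real t" using D by (simp add: algebra_simps)
  finally have n: "real (12*(5*(Q-P)*t) + 15*(Q*t - 5*(Q-P)*t)) = 15 * real P * real t" .
  have "Q > 0" using PQ by simp
  then show ?thesis using n t by (simp add: field_simps)
qed

theorem theorem1:
  fixes r :: rat
  assumes "4/5 \<le> r" and "r < 1"
  shows "\<exists>S :: graph set. infinite S \<and>
    (\<forall>G\<in>S. wf_graph G \<and> cubic G \<and> two_connected G \<and> bridgeless G \<and> m3 G = of_rat r) \<and>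
    (\<forall>G\<in>S. \<forall>H\<in>S. G \<noteq> H \<longrightarrow> \<not> graph_iso G H)"
proof -
  obtain p q where pq: "quotient_of r = (p, q)" by (cases "quotient_of r")
  have q0: "q > 0" using quotient_of_denom_pos[OF pq] .
  have rpq: "r = of_int p / of_int q" using quotient_of_div[OF pq] .
  have "(4/5::rat) \<le> of_int p / of_int q" using assms(1) rpq by simp
  then have "4 * of_int q \<le> (5 * of_int p :: rat)" using q0 by (simp add: field_simps)
  then have "of_int (4*q) \<le> (of_int (5*p) :: rat)" by simp
  then have h1: "4*q \<le> 5*p" by (simp only: of_int_le_iff)
  have "of_int p / of_int q < (1::rat)" using assms(2) rpq by simp
  then have "of_int p < (of_int q :: rat)" using q0 by (simp add: field_simps)
  then have h2: "p < q" by simp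
  define P where "P = nat p"
  define Q where "Q = nat q"
  have PQ: "4*Q \<le> 5*P" "P < Q" using h1 h2 q0 by (auto simp: P_def Q_def)
  have Q5: "5 \<le> Q" using PQ by simp
  have rr: "(of_rat r :: real) = real P / real Q"
  proof -
    have "p \<ge> 0" using h1 q0 by simp
    then have "(of_rat r :: real) = of_int p / of_int q" using rpq by (simp add: of_rat_divide)
    then show ?thesis using \<open>p \<ge> 0\<close> q0 by (simp add: P_def Q_def)
  qed
  define GG where "GG t = Gr (Q*(t+1)) (5*(Q-P)*(t+1))" for t
  have vG: "card (verts (GG t)) = 10*(Q*(t+1))" for t by (simp add: GG_def verts_Gr)
  have inj: "inj GG"
  proof (rule injI)
    fix t t' assume "GG t = GG t'"
    then have "10*(Q*(t+1)) = 10*(Q*(t'+1))" using vG by metis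
    then show "t = t'" using Q5 by simp
  qed
  have good: "wf_graph (GG t) \<and> cubic (GG t) \<and> two_connected (GG t) \<and> bridgeless (GG t) \<and> m3 (GG t) = of_rat r" for t
  proof -
    have N: "2 \<le> Q*(t+1)" using Q5 by (simp add: le_trans[OF _ mult_le_mono1[of 5 Q "t+1"]])
    have "5*(Q-P) \<le> Q" using PQ by simp
    then have a: "5*(Q-P)*(t+1) \<le> Q*(t+1)" by (rule mult_le_mono1)
    have "m3 (GG t) = real (12*(5*(Q-P)*(t+1)) + 15*(Q*(t+1) - 5*(Q-P)*(t+1))) / real (15*(Q*(t+1)))"
      using m3_Gr[OF N a] by (simp add: GG_def)
    also have "\<dots> = real P / real Q" using ratio[OF PQ, of "t+1"] by simp
    finally show ?thesis using Gr_good[OF N] rr by (simp add: GG_def)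
  qed
  have niso: "\<not> graph_iso G H" if hh: "G \<in> range GG" "H \<in> range GG" "G \<noteq> H" for G H
  proof
    assume "graph_iso G H"
    then obtain f where "bij_betw f (verts G) (verts H)" by (auto simp: graph_iso_def)
    then have c: "card (verts G) = card (verts H)" by (rule bij_betw_same_card)
    obtain t t' where "G = GG t" "H = GG t'" using hh(1,2) by blast
    then show False using c vG Q5 hh(3) by simp
  qed
  show ?thesis
    by (rule exI[of _ "range GG"]) (use inj good niso finite_imageD infinite_UNIV_nat in blast)
qed
end
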